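(* If $\mathcal{P}$ and $\mathcal{Q}$ are ranked finite posets, then $\mathcal{M}(\mathcal{P}\times\mathcal{Q},t)=\mathcal{M}(\mathcal{P},t)\,\mathcal{M}(\mathcal{Q},t)$.
   Context: $\mathcal{P}\times\mathcal{Q}$ carries the product order $(x_1,x_2)\le(y_1,y_2)$ iff $x_1\le y_1$ and $x_2\le y_2$, with rank $\mathrm{rk}(x_1,x_2)=\mathrm{rk}(x_1)+\mathrm{rk}(x_2)$. For a finite ranked poset $\mathcal{R}$, $\mathrm{rk}(\mathcal{R})$ is the maximum rank of an element and $\rho(x,y,z)=3\,\mathrm{rk}(\mathcal{R})-\mathrm{rk}(x)-\mathrm{rk}(y)-\mathrm{rk}(z)$. Let $\delta_3(x,y,z)=1$ if $x=y=z$ and $0$ otherwise, and $J=J_\mathcal{R}$ the unique integer-valued function on triples $x\le y\le z$ of $\mathcal{R}$ with $\sum_{x\le a\le y\le b\le z}J(a,y,b)=\delta_3(x,y,z)$ for all $x\le y\le z$. Then $\mathcal{M}(\mathcal{R},t)=\sum_{x\le y\le z}J(x,y,z)\,t^{\rho(x,y,z)}$. *)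

theory Defs
  imports Main "HOL-Computational_Algebra.Polynomial"
begin

definition finite_poset :: "'a set \<Rightarrow> ('a \<Rightarrow> 'a \<Rightarrow> bool) \<Rightarrow> bool" where
  "finite_poset A le \<longleftrightarrow> finite A
     \<and> (\<forall>x\<in>A. le x x)
     \<and> (\<forall>x\<in>A. \<forall>y\<in>A. le x y \<and> le y x \<longrightarrow> x = y)
     \<and> (\<forall>x\<in>A. \<forall>y\<in>A. \<forall>z\<in>A. le x y \<and> le y z \<longrightarrow> le x z)"

definition covers :: "'a set \<Rightarrow> ('a \<Rightarrow> 'a \<Rightarrow> bool) \<Rightarrow> 'a \<Rightarrow> 'a \<Rightarrow> bool" where
  "covers A le x y \<longleftrightarrow> x \<in> A \<and> y \<in> A \<and> le x y \<and> x \<noteq> y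
     \<and> \<not> (\<exists>z\<in>A. le x z \<and> le z y \<and> z \<noteq> x \<and> z \<noteq> y)"

definition ranked_finite_poset ::
    "'a set \<Rightarrow> ('a \<Rightarrow> 'a \<Rightarrow> bool) \<Rightarrow> ('a \<Rightarrow> nat) \<Rightarrow> bool" where
  "ranked_finite_poset A le rk \<longleftrightarrow> finite_poset A le
     \<and> (\<forall>x\<in>A. (\<forall>z\<in>A. le z x \<longrightarrow> z = x) \<longrightarrow> rk x = 0)
     \<and> (\<forall>x y. covers A le x y \<longrightarrow> rk y = rk x + 1)"

definition prod_le :: "('a \<Rightarrow> 'a \<Rightarrow> bool) \<Rightarrow> ('b \<Rightarrow> 'b \<Rightarrow> bool)
    \<Rightarrow> ('a \<times> 'b) \<Rightarrow> ('a \<times> 'b) \<Rightarrow> bool" where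
  "prod_le le1 le2 p q \<longleftrightarrow> le1 (fst p) (fst q) \<and> le2 (snd p) (snd q)"

definition prod_rk :: "('a \<Rightarrow> nat) \<Rightarrow> ('b \<Rightarrow> nat) \<Rightarrow> ('a \<times> 'b) \<Rightarrow> nat" where
  "prod_rk rk1 rk2 p = rk1 (fst p) + rk2 (snd p)"

definition poset_rank :: "'a set \<Rightarrow> ('a \<Rightarrow> nat) \<Rightarrow> nat" where
  "poset_rank A rk = Max (rk ` A)"

definition chains3 :: "'a set \<Rightarrow> ('a \<Rightarrow> 'a \<Rightarrow> bool) \<Rightarrow> ('a \<times> 'a \<times> 'a) set" where
  "chains3 A le = {(x, y, z). x \<in> A \<and> y \<in> A \<and> z \<in> A \<and> le x y \<and> le y z}"

definition delta3 :: "'a \<Rightarrow> 'a \<Rightarrow> 'a \<Rightarrow> int" where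
  "delta3 x y z = (if x = y \<and> y = z then 1 else 0)"

text \<open>The function J: the unique integer-valued function on triples x \<le> y \<le> z with
  sum over x \<le> a \<le> y \<le> b \<le> z of J(a,y,b) equal to delta3(x,y,z).
  (Outside the triples it is normalised to 0 to make it unique as a HOL function.)\<close>

definition Jfun :: "'a set \<Rightarrow> ('a \<Rightarrow> 'a \<Rightarrow> bool) \<Rightarrow> 'a \<Rightarrow> 'a \<Rightarrow> 'a \<Rightarrow> int" where
  "Jfun A le = (THE J.
      (\<forall>x y z. (x, y, z) \<notin> chains3 A le \<longrightarrow> J x y z = 0)
    \<and> (\<forall>x y z. (x, y, z) \<in> chains3 A le \<longrightarrow>
        (\<Sum>(a, b) \<in> {(a, b). a \<in> A \<and> b \<in> A \<and> le x a \<and> le a y \<and> le y b \<and> le b z}.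
            J a y b) = delta3 x y z))"

text \<open>rho(x,y,z) = 3 rk(R) - rk x - rk y - rk z, written as a sum of nonnegative terms.\<close>

definition rho :: "'a set \<Rightarrow> ('a \<Rightarrow> nat) \<Rightarrow> 'a \<Rightarrow> 'a \<Rightarrow> 'a \<Rightarrow> nat" where
  "rho A rk x y z = (poset_rank A rk - rk x) + (poset_rank A rk - rk y) + (poset_rank A rk - rk z)"

definition Mpoly :: "'a set \<Rightarrow> ('a \<Rightarrow> 'a \<Rightarrow> bool) \<Rightarrow> ('a \<Rightarrow> nat) \<Rightarrow> int poly" where
  "Mpoly A le rk = (\<Sum>(x, y, z) \<in> chains3 A le. monom (Jfun A le x y z) (rho A rk x y z))"

end

theory Submission
  imports Defs
begin

lemma tri_exists:
  fixes S :: "'s set" and I :: "'s \<Rightarrow> 's set" and g :: "'s \<Rightarrow> nat" and c :: "'s \<Rightarrow> int"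
  assumes "finite S" "\<forall>s\<in>S. I s \<subseteq> S \<and> s \<in> I s" "\<forall>s\<in>S. \<forall>t\<in>I s. t \<noteq> s \<longrightarrow> g t < g s"
  shows "\<exists>J. (\<forall>t. t \<notin> S \<longrightarrow> J t = 0) \<and> (\<forall>s\<in>S. (\<Sum>t\<in>I s. J t) = c s)"
  using assms
proof (induction "card S" arbitrary: S rule: less_induct)
  case less
  show ?case
  proof (cases "S = {}")
    case True then show ?thesis by (intro exI[of _ "\<lambda>_. 0"]) auto
  next
    case False
    have "Max (g ` S) \<in> g ` S" using False less.prems(1) by (intro Max_in) auto
    then obtain m where m: "m \<in> S" "g m = Max (g ` S)" by auto
    have mx: "\<forall>s\<in>S. g s \<le> g m" using m less.prems(1) by auto
    define S' where "S' = S - {m}"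
    have nm: "\<forall>s\<in>S'. m \<notin> I s" using less.prems(3) mx m unfolding S'_def by fastforce
    have "\<exists>J. (\<forall>t. t \<notin> S' \<longrightarrow> J t = 0) \<and> (\<forall>s\<in>S'. (\<Sum>t\<in>I s. J t) = c s)"
      apply (rule less.hyps)
      using m less.prems nm unfolding S'_def apply (auto simp: card_Diff1_less)
      using card_gt_0_iff by (metis diff_Suc_less equals0D)
    then obtain J' where J': "\<forall>t. t \<notin> S' \<longrightarrow> J' t = 0" "\<forall>s\<in>S'. (\<Sum>t\<in>I s. J' t) = c s" by blast
    define J where "J = J'(m := c m - (\<Sum>t\<in>I m - {m}. J' t))"
    have fI: "finite (I m)" using less.prems m by (meson finite_subset)
    have "\<forall>t. t \<notin> S \<longrightarrow> J t = 0" using J' m unfolding J_def S'_def by auto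
    moreover have "(\<Sum>t\<in>I s. J t) = c s" if s: "s \<in> S" for s
    proof (cases "s = m")
      case True
      have "(\<Sum>t\<in>I m. J t) = J m + (\<Sum>t\<in>I m - {m}. J t)"
        using fI less.prems m by (simp add: sum.remove)
      also have "(\<Sum>t\<in>I m - {m}. J t) = (\<Sum>t\<in>I m - {m}. J' t)"
        by (rule sum.cong) (auto simp: J_def)
      finally show ?thesis using True by (simp add: J_def)
    next
      case False
      then have "s \<in> S'" using s S'_def by auto
      then have "(\<Sum>t\<in>I s. J t) = (\<Sum>t\<in>I s. J' t)"
        using nm by (intro sum.cong) (auto simp: J_def)
      then show ?thesis using J' \<open>s \<in> S'\<close> by simp
    qed
    ultimately show ?thesis by blast
  qed
qed

lemma tri_unique:
  fixes S :: "'s set" and I :: "'s \<Rightarrow> 's set" and g :: "'s \<Rightarrow> nat" and c :: "'s \<Rightarrow> int"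
  assumes "finite S" "\<forall>s\<in>S. I s \<subseteq> S \<and> s \<in> I s" "\<forall>s\<in>S. \<forall>t\<in>I s. t \<noteq> s \<longrightarrow> g t < g s"
    and J1: "(\<forall>t. t \<notin> S \<longrightarrow> J1 t = 0) \<and> (\<forall>s\<in>S. (\<Sum>t\<in>I s. J1 t) = c s)"
    and J2: "(\<forall>t. t \<notin> S \<longrightarrow> J2 t = 0) \<and> (\<forall>s\<in>S. (\<Sum>t\<in>I s. J2 t) = c s)"
  shows "J1 = J2"
proof -
  have "\<forall>s. g s = n \<longrightarrow> s \<in> S \<longrightarrow> J1 s = J2 s" for n
  proof (induction n rule: less_induct)
    case (less n)
    show ?case
    proof (intro allI impI)
      fix s assume s: "g s = n" "s \<in> S"
      have fI: "finite (I s)" using assms s by (meson finite_subset)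
      have eq: "(\<Sum>t\<in>I s - {s}. J1 t) = (\<Sum>t\<in>I s - {s}. J2 t)"
        using less.IH assms(2,3) s by (intro sum.cong) blast+
      have "J1 s + (\<Sum>t\<in>I s - {s}. J1 t) = J2 s + (\<Sum>t\<in>I s - {s}. J2 t)"
        using J1 J2 s fI assms(2) by (simp add: sum.remove[symmetric])
      then show "J1 s = J2 s" using eq by simp
    qed
  qed
  then show ?thesis using J1 J2 by (intro ext) metis
qed

definition Kset :: "'a set \<Rightarrow> ('a \<Rightarrow> 'a \<Rightarrow> bool) \<Rightarrow> 'a \<Rightarrow> 'a \<Rightarrow> 'a \<Rightarrow> ('a \<times> 'a) set" where
  "Kset A le x y z = {(a, b). a \<in> A \<and> b \<in> A \<and> le x a \<and> le a y \<and> le y b \<and> le b z}"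

definition Jspec :: "'a set \<Rightarrow> ('a \<Rightarrow> 'a \<Rightarrow> bool) \<Rightarrow> ('a \<Rightarrow> 'a \<Rightarrow> 'a \<Rightarrow> int) \<Rightarrow> bool" where
  "Jspec A le J \<longleftrightarrow> (\<forall>x y z. (x, y, z) \<notin> chains3 A le \<longrightarrow> J x y z = 0)
    \<and> (\<forall>x y z. (x, y, z) \<in> chains3 A le \<longrightarrow>
        (\<Sum>(a, b) \<in> {(a, b). a \<in> A \<and> b \<in> A \<and> le x a \<and> le a y \<and> le y b \<and> le b z}.
            J a y b) = delta3 x y z)"

lemma Jfun_alt: "Jfun A le = (THE J. Jspec A le J)"
  unfolding Jfun_def Jspec_def ..

definition Iset :: "'a set \<Rightarrow> ('a \<Rightarrow> 'a \<Rightarrow> bool) \<Rightarrow> 'a \<times> 'a \<times> 'a \<Rightarrow> ('a \<times> 'a \<times> 'a) set" where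
  "Iset A le s = (case s of (x, y, z) \<Rightarrow> (\<lambda>(a, b). (a, y, b)) ` Kset A le x y z)"

lemma Iset_sum:
  "(\<Sum>t\<in>Iset A le (x, y, z). case t of (a, y', b) \<Rightarrow> J a y' b) = (\<Sum>(a, b) \<in> Kset A le x y z. J a y b)"
proof -
  have "inj_on (\<lambda>(a, b). (a, y, b)) (Kset A le x y z)" by (auto simp: inj_on_def)
  then show ?thesis unfolding Iset_def by (simp add: sum.reindex) (auto intro!: sum.cong)
qed

lemma Jspec_alt:
  "Jspec A le J \<longleftrightarrow> (\<forall>t. t \<notin> chains3 A le \<longrightarrow> (case t of (a, y', b) \<Rightarrow> J a y' b) = 0)
     \<and> (\<forall>s\<in>chains3 A le. (\<Sum>t\<in>Iset A le s. case t of (a, y', b) \<Rightarrow> J a y' b) = (case s of (x,y,z) \<Rightarrow> delta3 x y z))"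
  unfolding Jspec_def Kset_def[symmetric] by (simp only: Ball_def split_paired_All Iset_sum prod.case)

lemma fp_props:
  assumes "finite_poset A le"
  shows "finite (chains3 A le)"
    "\<forall>s\<in>chains3 A le. Iset A le s \<subseteq> chains3 A le \<and> s \<in> Iset A le s"
    "\<forall>s\<in>chains3 A le. \<forall>t\<in>Iset A le s. t \<noteq> s \<longrightarrow> card (Iset A le t) < card (Iset A le s)"
proof -
  have fA: "finite A" and rf: "\<forall>x\<in>A. le x x"
    and an: "\<forall>x\<in>A. \<forall>y\<in>A. le x y \<and> le y x \<longrightarrow> x = y"
    and tr: "\<forall>x\<in>A. \<forall>y\<in>A. \<forall>z\<in>A. le x y \<and> le y z \<longrightarrow> le x z"
    using assms unfolding finite_poset_def by blast+
  have trR: "\<And>p q r. p \<in> A \<Longrightarrow> q \<in> A \<Longrightarrow> r \<in> A \<Longrightarrow> le p q \<Longrightarrow> le q r \<Longrightarrow> le p r"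
    using tr by blast
  have anR: "\<And>p q. p \<in> A \<Longrightarrow> q \<in> A \<Longrightarrow> le p q \<Longrightarrow> le q p \<Longrightarrow> p = q"
    using an by blast
  have sub: "chains3 A le \<subseteq> A \<times> A \<times> A" unfolding chains3_def by auto
  then show f: "finite (chains3 A le)" using fA finite_subset by blast
  show II: "\<forall>s\<in>chains3 A le. Iset A le s \<subseteq> chains3 A le \<and> s \<in> Iset A le s"
  proof
    fix s assume s: "s \<in> chains3 A le"
    obtain x y z where sxyz: "s = (x, y, z)" by (metis prod.collapse)
    have xyz: "x \<in> A" "y \<in> A" "z \<in> A" "le x y" "le y z" using s sxyz unfolding chains3_def by auto
    have "Iset A le s \<subseteq> chains3 A le"
    proof
      fix t assume "t \<in> Iset A le s"
      then obtain a b where "t = (a, y, b)" "a \<in> A" "b \<in> A" "le a y" "le y b"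
        unfolding sxyz Iset_def Kset_def by auto
      then show "t \<in> chains3 A le" using xyz unfolding chains3_def by simp
    qed
    moreover have "(x, z) \<in> Kset A le x y z" using xyz rf unfolding Kset_def by simp
    then have "s \<in> Iset A le s" unfolding sxyz Iset_def by (auto intro: image_eqI[where x="(x, z)"])
    ultimately show "Iset A le s \<subseteq> chains3 A le \<and> s \<in> Iset A le s" by blast
  qed
  show "\<forall>s\<in>chains3 A le. \<forall>t\<in>Iset A le s. t \<noteq> s \<longrightarrow> card (Iset A le t) < card (Iset A le s)"
  proof (intro ballI impI)
    fix s t assume s: "s \<in> chains3 A le" and t: "t \<in> Iset A le s" and ne: "t \<noteq> s"
    obtain x y z where sxyz: "s = (x, y, z)" by (cases s)
    obtain a b where tab: "t = (a, y, b)" "a \<in> A" "b \<in> A" "le x a" "le a y" "le y b" "le b z"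
      using t unfolding sxyz Iset_def Kset_def by auto
    have xyz: "x \<in> A" "y \<in> A" "z \<in> A" "le x y" "le y z" using s sxyz unfolding chains3_def by auto
    have "Iset A le t \<subseteq> Iset A le s"
    proof
      fix u assume "u \<in> Iset A le t"
      then obtain a' b' where u: "u = (a', y, b')" "a' \<in> A" "b' \<in> A" "le a a'" "le a' y" "le y b'" "le b' b"
        unfolding tab Iset_def Kset_def by auto
      have "le x a'" using trR[of x a a'] xyz tab u by blast
      moreover have "le b' z" using trR[of b' b z] xyz tab u by blast
      ultimately have "(a', b') \<in> Kset A le x y z" using u unfolding Kset_def by auto
      then show "u \<in> Iset A le s" unfolding sxyz Iset_def u by (auto intro: image_eqI[where x="(a', b')"])
    qed
    moreover have "s \<notin> Iset A le t"
    proof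
      assume "s \<in> Iset A le t"
      then have "le a x" "le z b" unfolding tab sxyz Iset_def Kset_def by auto
      then have "a = x" "b = z" using anR[of a x] anR[of z b] tab xyz by auto
      then show False using ne tab sxyz by simp
    qed
    moreover have "s \<in> Iset A le s" using II s by auto
    moreover have "finite (Iset A le s)" using II s f finite_subset by blast
    ultimately show "card (Iset A le t) < card (Iset A le s)"
      by (metis psubsetI psubset_card_mono)
  qed
qed

lemma Jspec_exists: assumes "finite_poset A le" shows "\<exists>J. Jspec A le J"
proof -
  obtain J' where J': "(\<forall>t. t \<notin> chains3 A le \<longrightarrow> J' t = 0) \<and>
     (\<forall>s\<in>chains3 A le. (\<Sum>t\<in>Iset A le s. J' t) = (case s of (x,y,z) \<Rightarrow> delta3 x y z))"
    using tri_exists[OF fp_props[OF assms]] by blast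
  have "Jspec A le (\<lambda>x y z. J' (x, y, z))"
    unfolding Jspec_alt using J' by (simp add: case_prod_beta')
  then show ?thesis by blast
qed

lemma Jspec_unique: assumes "finite_poset A le" "Jspec A le J1" "Jspec A le J2" shows "J1 = J2"
proof -
  have "(\<lambda>t. case t of (a, y', b) \<Rightarrow> J1 a y' b) = (\<lambda>t. case t of (a, y', b) \<Rightarrow> J2 a y' b)"
    apply (rule tri_unique[OF fp_props[OF assms(1)], where c="\<lambda>s. case s of (x,y,z) \<Rightarrow> delta3 x y z"])
    using assms(2,3) unfolding Jspec_alt by blast+
  then have "\<And>x y z. J1 x y z = J2 x y z" by (metis (no_types, lifting) case_prod_conv)
  then show ?thesis by (intro ext)
qed

lemma Jfun_spec: assumes "finite_poset A le" shows "Jspec A le (Jfun A le)"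
  unfolding Jfun_alt using Jspec_exists[OF assms] Jspec_unique[OF assms] by (metis theI)

lemma Jfun_eq: assumes "finite_poset A le" "Jspec A le J" shows "Jfun A le = J"
  using Jspec_unique[OF assms(1) Jfun_spec[OF assms(1)] assms(2)] .

lemma prod_fp: assumes "finite_poset P leP" "finite_poset Q leQ"
  shows "finite_poset (P \<times> Q) (prod_le leP leQ)"
proof -
  have fA: "finite P" and rf: "\<forall>x\<in>P. leP x x"
    and an: "\<forall>x\<in>P. \<forall>y\<in>P. leP x y \<and> leP y x \<longrightarrow> x = y"
    and tr: "\<forall>x\<in>P. \<forall>y\<in>P. \<forall>z\<in>P. leP x y \<and> leP y z \<longrightarrow> leP x z"
    using assms(1) unfolding finite_poset_def by blast+
  have fB: "finite Q" and rfB: "\<forall>x\<in>Q. leQ x x"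
    and anB: "\<forall>x\<in>Q. \<forall>y\<in>Q. leQ x y \<and> leQ y x \<longrightarrow> x = y"
    and trB: "\<forall>x\<in>Q. \<forall>y\<in>Q. \<forall>z\<in>Q. leQ x y \<and> leQ y z \<longrightarrow> leQ x z"
    using assms(2) unfolding finite_poset_def by blast+
  have r: "\<forall>x\<in>P \<times> Q. prod_le leP leQ x x" using rf rfB by (auto simp: prod_le_def)
  have a: "\<forall>x\<in>P \<times> Q. \<forall>y\<in>P \<times> Q. prod_le leP leQ x y \<and> prod_le leP leQ y x \<longrightarrow> x = y"
  proof (intro ballI impI)
    fix x y assume "x \<in> P \<times> Q" "y \<in> P \<times> Q" "prod_le leP leQ x y \<and> prod_le leP leQ y x"
    then show "x = y" using an anB unfolding prod_le_def by (metis mem_Times_iff prod_eq_iff)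
  qed
  have t: "\<forall>x\<in>P \<times> Q. \<forall>y\<in>P \<times> Q. \<forall>z\<in>P \<times> Q. prod_le leP leQ x y \<and> prod_le leP leQ y z \<longrightarrow> prod_le leP leQ x z"
  proof (intro ballI impI)
    fix x y z assume "x \<in> P \<times> Q" "y \<in> P \<times> Q" "z \<in> P \<times> Q" "prod_le leP leQ x y \<and> prod_le leP leQ y z"
    then show "prod_le leP leQ x z" using tr trB unfolding prod_le_def by (metis mem_Times_iff)
  qed
  have "finite (P \<times> Q)" using fA fB by simp
  then show ?thesis unfolding finite_poset_def using r a t by blast
qed

lemma delta3_prod: "delta3 (x1, x2) (y1, y2) (z1, z2) = delta3 x1 y1 z1 * delta3 x2 y2 z2"
  unfolding delta3_def by auto

lemma Jfun_prod:
  assumes "finite_poset P leP" "finite_poset Q leQ"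
  shows "Jfun (P \<times> Q) (prod_le leP leQ) =
    (\<lambda>p q r. Jfun P leP (fst p) (fst q) (fst r) * Jfun Q leQ (snd p) (snd q) (snd r))"
proof (rule Jfun_eq[OF prod_fp[OF assms]])
  define JP where "JP = Jfun P leP"
  define JQ where "JQ = Jfun Q leQ"
  have sP: "Jspec P leP JP" unfolding JP_def by (rule Jfun_spec[OF assms(1)])
  have sQ: "Jspec Q leQ JQ" unfolding JQ_def by (rule Jfun_spec[OF assms(2)])
  show "Jspec (P \<times> Q) (prod_le leP leQ) (\<lambda>p q r. Jfun P leP (fst p) (fst q) (fst r) * Jfun Q leQ (snd p) (snd q) (snd r))"
    unfolding JP_def[symmetric] JQ_def[symmetric] Jspec_def Kset_def[symmetric]
  proof (intro conjI allI impI)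
    fix p q r assume "(p, q, r) \<notin> chains3 (P \<times> Q) (prod_le leP leQ)"
    then have "(fst p, fst q, fst r) \<notin> chains3 P leP \<or> (snd p, snd q, snd r) \<notin> chains3 Q leQ"
      unfolding chains3_def prod_le_def by (auto simp: mem_Times_iff)
    then show "JP (fst p) (fst q) (fst r) * JQ (snd p) (snd q) (snd r) = 0"
      using sP sQ unfolding Jspec_def by auto
  next
    fix p q r assume c: "(p, q, r) \<in> chains3 (P \<times> Q) (prod_le leP leQ)"
    obtain x1 x2 y1 y2 z1 z2 where pqr: "p = (x1, x2)" "q = (y1, y2)" "r = (z1, z2)"
      by (cases p, cases q, cases r) auto
    have c1: "(x1, y1, z1) \<in> chains3 P leP" and c2: "(x2, y2, z2) \<in> chains3 Q leQ"
      using c pqr unfolding chains3_def prod_le_def by auto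
    define h :: "('a \<times> 'a) \<times> ('b \<times> 'b) \<Rightarrow> ('a \<times> 'b) \<times> ('a \<times> 'b)"
      where "h = (\<lambda>((a1, b1), (a2, b2)). ((a1, a2), (b1, b2)))"
    have hinj: "inj_on h (Kset P leP x1 y1 z1 \<times> Kset Q leQ x2 y2 z2)"
      unfolding h_def inj_on_def by auto
    have himg: "Kset (P \<times> Q) (prod_le leP leQ) p q r = h ` (Kset P leP x1 y1 z1 \<times> Kset Q leQ x2 y2 z2)"
    proof (rule set_eqI)
      fix u :: "('a \<times> 'b) \<times> ('a \<times> 'b)"
      obtain a1 a2 b1 b2 where u: "u = ((a1, a2), (b1, b2))" by (cases u) auto
      have "u = h ((a1, b1), (a2, b2))" unfolding u h_def by simp
      moreover have "\<And>v. u = h v \<Longrightarrow> v = ((a1, b1), (a2, b2))" unfolding u h_def by auto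
      ultimately have "u \<in> h ` X \<longleftrightarrow> ((a1, b1), (a2, b2)) \<in> X" for X by blast
      then show "u \<in> Kset (P \<times> Q) (prod_le leP leQ) p q r \<longleftrightarrow> u \<in> h ` (Kset P leP x1 y1 z1 \<times> Kset Q leQ x2 y2 z2)"
        unfolding u pqr Kset_def prod_le_def by auto
    qed
    have "(\<Sum>(a, b)\<in>Kset (P \<times> Q) (prod_le leP leQ) p q r. JP (fst a) (fst q) (fst b) * JQ (snd a) (snd q) (snd b))
        = (\<Sum>u\<in>Kset P leP x1 y1 z1 \<times> Kset Q leQ x2 y2 z2.
             (case fst u of (a1, b1) \<Rightarrow> JP a1 y1 b1) * (case snd u of (a2, b2) \<Rightarrow> JQ a2 y2 b2))"
      unfolding himg using hinj by (simp add: sum.reindex) (auto simp: h_def pqr intro!: sum.cong)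
    also have "\<dots> = (\<Sum>(a1, b1)\<in>Kset P leP x1 y1 z1. JP a1 y1 b1) * (\<Sum>(a2, b2)\<in>Kset Q leQ x2 y2 z2. JQ a2 y2 b2)"
      by (simp add: sum_product sum.cartesian_product case_prod_beta')
    also have "\<dots> = delta3 x1 y1 z1 * delta3 x2 y2 z2"
      using sP sQ c1 c2 unfolding Jspec_def Kset_def by auto
    also have "\<dots> = delta3 p q r" unfolding pqr delta3_prod ..
    finally show "(\<Sum>(a, b)\<in>Kset (P \<times> Q) (prod_le leP leQ) p q r. JP (fst a) (fst q) (fst b) * JQ (snd a) (snd q) (snd b)) = delta3 p q r" .
  qed
qed

lemma chains3_empty: "A = {} \<Longrightarrow> chains3 A le = {}" unfolding chains3_def by auto

lemma rank_prod:
  assumes "finite P" "finite Q" "P \<noteq> {}" "Q \<noteq> {}"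
  shows "poset_rank (P \<times> Q) (prod_rk rkP rkQ) = poset_rank P rkP + poset_rank Q rkQ"
proof -
  have "Max (rkP ` P) \<in> rkP ` P" using assms by (intro Max_in) auto
  then obtain a where a: "a \<in> P" "rkP a = Max (rkP ` P)" by auto
  have "Max (rkQ ` Q) \<in> rkQ ` Q" using assms by (intro Max_in) auto
  then obtain b where b: "b \<in> Q" "rkQ b = Max (rkQ ` Q)" by auto
  show ?thesis unfolding poset_rank_def
  proof (rule Max_eqI)
    show "finite (prod_rk rkP rkQ ` (P \<times> Q))" using assms by auto
    show "y \<le> Max (rkP ` P) + Max (rkQ ` Q)" if hy: "y \<in> prod_rk rkP rkQ ` (P \<times> Q)" for y
    proof -
      obtain a' b' where ab: "a' \<in> P" "b' \<in> Q" "y = rkP a' + rkQ b'"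
        using hy unfolding prod_rk_def by force
      have "rkP a' \<le> Max (rkP ` P)" using ab assms by simp
      moreover have "rkQ b' \<le> Max (rkQ ` Q)" using ab assms by simp
      ultimately show ?thesis using ab by simp
    qed
    show "Max (rkP ` P) + Max (rkQ ` Q) \<in> prod_rk rkP rkQ ` (P \<times> Q)"
    proof -
      have "prod_rk rkP rkQ (a, b) = Max (rkP ` P) + Max (rkQ ` Q)" using a b by (simp add: prod_rk_def)
      moreover have "(a, b) \<in> P \<times> Q" using a b by simp
      ultimately show ?thesis by (metis image_eqI)
    qed
  qed
qed

theorem proposition6p6:
  fixes P :: "'a set" and leP :: "'a \<Rightarrow> 'a \<Rightarrow> bool" and rkP :: "'a \<Rightarrow> nat"
    and Q :: "'b set" and leQ :: "'b \<Rightarrow> 'b \<Rightarrow> bool" and rkQ :: "'b \<Rightarrow> nat"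
  assumes "ranked_finite_poset P leP rkP"
    and "ranked_finite_poset Q leQ rkQ"
  shows "Mpoly (P \<times> Q) (prod_le leP leQ) (prod_rk rkP rkQ) = Mpoly P leP rkP * Mpoly Q leQ rkQ"
proof -
  have fP: "finite_poset P leP" and fQ: "finite_poset Q leQ"
    using assms unfolding ranked_finite_poset_def by blast+
  have finP: "finite P" and finQ: "finite Q" using fP fQ unfolding finite_poset_def by blast+
  show ?thesis
  proof (cases "P = {} \<or> Q = {}")
    case True
    then show ?thesis unfolding Mpoly_def by (auto simp: chains3_empty)
  next
    case False
    then have ne: "P \<noteq> {}" "Q \<noteq> {}" by auto
    define RP where "RP = poset_rank P rkP"
    define RQ where "RQ = poset_rank Q rkQ"
    have R: "poset_rank (P \<times> Q) (prod_rk rkP rkQ) = RP + RQ"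
      unfolding RP_def RQ_def by (rule rank_prod[OF finP finQ ne])
    have leRP: "rkP x \<le> RP" if "x \<in> P" for x unfolding RP_def poset_rank_def using finP that by auto
    have leRQ: "rkQ x \<le> RQ" if "x \<in> Q" for x unfolding RQ_def poset_rank_def using finQ that by auto
    define h :: "('a \<times> 'a \<times> 'a) \<times> ('b \<times> 'b \<times> 'b) \<Rightarrow> ('a \<times> 'b) \<times> ('a \<times> 'b) \<times> ('a \<times> 'b)"
      where "h = (\<lambda>((x1, y1, z1), (x2, y2, z2)). ((x1, x2), (y1, y2), (z1, z2)))"
    have hinj: "inj_on h (chains3 P leP \<times> chains3 Q leQ)" unfolding h_def inj_on_def by auto
    have himg: "chains3 (P \<times> Q) (prod_le leP leQ) = h ` (chains3 P leP \<times> chains3 Q leQ)"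
    proof (rule set_eqI)
      fix u :: "('a \<times> 'b) \<times> ('a \<times> 'b) \<times> ('a \<times> 'b)"
      obtain x1 x2 y1 y2 z1 z2 where u: "u = ((x1, x2), (y1, y2), (z1, z2))"
        by (metis prod.collapse)
      have hu: "h ((x1, y1, z1), (x2, y2, z2)) = u" unfolding u h_def by simp
      have hinv: "v = ((x1, y1, z1), (x2, y2, z2))" if "h v = u" for v
      proof -
        obtain a1 b1 c1 a2 b2 c2 where v: "v = ((a1, b1, c1), (a2, b2, c2))" by (metis prod.collapse)
        show ?thesis using that unfolding v u h_def by simp
      qed
      have f1: "u \<in> h ` (chains3 P leP \<times> chains3 Q leQ) \<longleftrightarrow>
          ((x1, y1, z1), (x2, y2, z2)) \<in> chains3 P leP \<times> chains3 Q leQ"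
      proof
        assume "u \<in> h ` (chains3 P leP \<times> chains3 Q leQ)"
        then obtain v where "v \<in> chains3 P leP \<times> chains3 Q leQ" "h v = u" by blast
        then show "((x1, y1, z1), (x2, y2, z2)) \<in> chains3 P leP \<times> chains3 Q leQ" using hinv by simp
      next
        assume "((x1, y1, z1), (x2, y2, z2)) \<in> chains3 P leP \<times> chains3 Q leQ"
        then show "u \<in> h ` (chains3 P leP \<times> chains3 Q leQ)" using hu by (metis image_eqI)
      qed
      have f2: "u \<in> chains3 (P \<times> Q) (prod_le leP leQ) \<longleftrightarrow> (x1,y1,z1) \<in> chains3 P leP \<and> (x2,y2,z2) \<in> chains3 Q leQ"
        unfolding u chains3_def prod_le_def by auto
      show "u \<in> chains3 (P \<times> Q) (prod_le leP leQ) \<longleftrightarrow> u \<in> h ` (chains3 P leP \<times> chains3 Q leQ)"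
        unfolding f1 f2 mem_Sigma_iff ..
    qed
    have "Mpoly (P \<times> Q) (prod_le leP leQ) (prod_rk rkP rkQ)
       = (\<Sum>u\<in>chains3 P leP \<times> chains3 Q leQ.
            (case fst u of (x, y, z) \<Rightarrow> monom (Jfun P leP x y z) (rho P rkP x y z)) *
            (case snd u of (x, y, z) \<Rightarrow> monom (Jfun Q leQ x y z) (rho Q rkQ x y z)))"
    proof -
      have pt: "(case h u of (x, y, z) \<Rightarrow> monom (Jfun (P \<times> Q) (prod_le leP leQ) x y z) (rho (P \<times> Q) (prod_rk rkP rkQ) x y z))
         = (case fst u of (x, y, z) \<Rightarrow> monom (Jfun P leP x y z) (rho P rkP x y z)) *
            (case snd u of (x, y, z) \<Rightarrow> monom (Jfun Q leQ x y z) (rho Q rkQ x y z))"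
        if "u \<in> chains3 P leP \<times> chains3 Q leQ" for u
      proof -
        obtain x1 y1 z1 x2 y2 z2 where u: "u = ((x1, y1, z1), (x2, y2, z2))" by (cases u) auto
        have m: "x1 \<in> P" "y1 \<in> P" "z1 \<in> P" "x2 \<in> Q" "y2 \<in> Q" "z2 \<in> Q"
          using that u unfolding chains3_def by auto
        have "rho (P \<times> Q) (prod_rk rkP rkQ) (x1, x2) (y1, y2) (z1, z2) = rho P rkP x1 y1 z1 + rho Q rkQ x2 y2 z2"
          unfolding rho_def R RP_def[symmetric] RQ_def[symmetric] prod_rk_def fst_conv snd_conv
          using leRP[OF m(1)] leRP[OF m(2)] leRP[OF m(3)] leRQ[OF m(4)] leRQ[OF m(5)] leRQ[OF m(6)]
          by linarith
        then show ?thesis unfolding u h_def by (simp add: Jfun_prod[OF fP fQ] mult_monom)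
      qed
      show ?thesis
        unfolding Mpoly_def himg sum.reindex[OF hinj] o_def
        by (rule sum.cong[OF refl pt])
    qed
    also have "\<dots> = Mpoly P leP rkP * Mpoly Q leQ rkQ"
      unfolding Mpoly_def by (simp add: sum_product sum.cartesian_product case_prod_beta')
    finally show ?thesis .
  qed
qed

end
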